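(* Let $\mathcal T$ be an orbital category. The monotone map $\mathfrak R:\mathrm{wIndSys}^{uni}_{\mathcal T}\to\mathrm{Transf}_{\mathcal T}$ has a fully faithful right adjoint, given by the composite of the inverse of the bijection $\mathfrak R|:\mathrm{IndSys}_{\mathcal T}\xrightarrow{\sim}\mathrm{Transf}_{\mathcal T}$ with the inclusion $\mathrm{IndSys}_{\mathcal T}\hookrightarrow\mathrm{wIndSys}^{uni}_{\mathcal T}$, and a fully faithful left adjoint given by $R\mapsto\overline{\underline{\mathbb F}}_R$.
   Context: For a small category $\mathcal T$, $\mathbb F_{\mathcal T}$ is the full subcategory of $\mathrm{Fun}(\mathcal T^{op},\mathrm{Set})$ on finite coproducts of representables; $\mathcal T$ is orbital if $\mathbb F_{\mathcal T}$ has pullbacks. $\mathbb F_V:=\mathbb F_{\mathcal T,/V}$, $*_V$ terminal, $\emptyset_V$ initial, $n\cdot S$ the $n$-fold coproduct; for $U\to V$, $\mathrm{Res}^V_U$ is pullback and $\mathrm{Ind}^V_U$ postcomposition. A full $\mathcal T$-subcategory assigns isomorphism-closed classes $\mathcal C_V\subseteq\mathrm{Ob}\,\mathbb F_V$ stable under restriction. For $S\in\mathbb F_V$ with orbits $U$ and $T_U\in\mathbb F_U$, $\coprod_U^ST_U:=\coprod_U\mathrm{Ind}_U^VT_U$. A $\mathcal T$-weak indexing system is a full $\mathcal T$-subcategory with $\mathcal C_V\neq\emptyset\Rightarrow *_V\in\mathcal C_V$ and closed under $\coprod^S_UT_U$ for $S\in\mathcal C_V$, $T_U\in\mathcal C_U$.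 It is unital if every $\mathcal C_V$ is nonempty and $S\sqcup S'\in\mathcal C_V\Rightarrow S,S'\in\mathcal C_V$; an indexing system if moreover each $\mathcal C_V$ is closed under finite coproducts. $\mathrm{wIndSys}^{uni}_{\mathcal T}\supseteq\mathrm{IndSys}_{\mathcal T}$ are the posets under inclusion; the poset of weak indexing systems has arbitrary meets (intersections), so for any collection $\mathcal D$ there is a smallest weak indexing system $\mathrm{Cl}_\infty(\mathcal D)$ containing it, and joins $\vee$ exist. A transfer system is a wide subcategory $R\subseteq\mathcal T$ containing all isomorphisms such that for every commutative square $V'\to V$, $\alpha':V'\to U'$, $\alpha:V\to U$, $U'\to U$ in $\mathcal T$ with $\alpha\in R$ and the induced map $V'\to V\times_UU'$ in $\mathbb F_{\mathcal T}$ a summand inclusion, $\alpha'\in R$; $\mathrm{Transf}_{\mathcal T}$ is their poset. $\mathfrak R(\mathcal C)$ is the set of maps $U\to V$ in $\mathcal T$ such that $U$, viewed as a $V$-set, lies in $\mathcal C_V$; it is a transfer system for unital $\mathcal C$, and it is a known fact that $\mathfrak R$ restricts to a bijection $\mathrm{IndSys}_{\mathcal T}\to\mathrm{Transf}_{\mathcal T}$. $\underline{\mathbb F}^0_{\mathcal T}$ has $V$-values $\{\emptyset_V,*_V\}$, and $\overline{\underline{\mathbb F}}_R:=\underline{\mathbb F}^0_{\mathcal T}\vee\mathrm{Cl}_\infty\big(\{\mathrm{Res}^W_VU\mid (U\to W)\in R,\ (V\to W)\in\mathcal T\}\big)$, where $U$ is regarded as a $W$-set. Adjoints of monotone maps: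 $L\dashv\pi$ iff $L(x)\le y\iff x\le\pi(y)$; fully faithful means order-reflecting. *)

theory Defs
  imports Main
begin

text \<open>A small category: a set of objects, a set of arrows with domain and codomain,
composition (cComp g f = g o f) and identities.\<close>

record ('o, 'm) cat =
  cOb   :: "'o set"
  cAr   :: "'m set"
  cDom  :: "'m \<Rightarrow> 'o"
  cCod  :: "'m \<Rightarrow> 'o"
  cComp :: "'m \<Rightarrow> 'm \<Rightarrow> 'm"
  cId   :: "'o \<Rightarrow> 'm"

definition hom :: "('o,'m) cat \<Rightarrow> 'o \<Rightarrow> 'o \<Rightarrow> 'm set" where
  "hom T X Y = {f \<in> cAr T. cDom T f = X \<and> cCod T f = Y}"

definition is_category :: "('o,'m) cat \<Rightarrow> bool" where
  "is_category T \<longleftrightarrow>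
     (\<forall>f\<in>cAr T. cDom T f \<in> cOb T \<and> cCod T f \<in> cOb T) \<and>
     (\<forall>X\<in>cOb T. cId T X \<in> hom T X X) \<and>
     (\<forall>f g. f \<in> cAr T \<and> g \<in> cAr T \<and> cCod T f = cDom T g \<longrightarrow>
            cComp T g f \<in> hom T (cDom T f) (cCod T g)) \<and>
     (\<forall>f g h. f \<in> cAr T \<and> g \<in> cAr T \<and> h \<in> cAr T \<and> cCod T f = cDom T g \<and> cCod T g = cDom T h
            \<longrightarrow> cComp T h (cComp T g f) = cComp T (cComp T h g) f) \<and>
     (\<forall>f\<in>cAr T. cComp T (cId T (cCod T f)) f = f \<and> cComp T f (cId T (cDom T f)) = f)"

definition is_iso :: "('o,'m) cat \<Rightarrow> 'm \<Rightarrow> bool" where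
  "is_iso T f \<longleftrightarrow> f \<in> cAr T \<and>
     (\<exists>g\<in>hom T (cCod T f) (cDom T f). cComp T g f = cId T (cDom T f) \<and> cComp T f g = cId T (cCod T f))"

text \<open>An object of F_T (a finite coproduct of representables) is a finite list of objects of T.
By the Yoneda lemma (coproducts of presheaves being pointwise), a morphism from the coproduct
of the representables As!i to that of Bs!j is a choice, for every i, of an index phi i and an arrow
As!i \<rightarrow> Bs!(phi i) in T.  Morphisms are represented as pairs (phi, fs), compared extensionally
on the indices of the source.\<close>

type_synonym 'm fmor = "(nat \<Rightarrow> nat) \<times> (nat \<Rightarrow> 'm)"

definition Fobj :: "('o,'m) cat \<Rightarrow> 'o list \<Rightarrow> bool" where
  "Fobj T As \<longleftrightarrow> set As \<subseteq> cOb T"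

definition fhom :: "('o,'m) cat \<Rightarrow> 'o list \<Rightarrow> 'o list \<Rightarrow> 'm fmor set" where
  "fhom T As Bs = {m. \<forall>i<length As. fst m i < length Bs \<and> snd m i \<in> hom T (As!i) (Bs!(fst m i))}"

definition feq :: "'o list \<Rightarrow> 'm fmor \<Rightarrow> 'm fmor \<Rightarrow> bool" where
  "feq As m m' \<longleftrightarrow> (\<forall>i<length As. fst m i = fst m' i \<and> snd m i = snd m' i)"

definition fcomp :: "('o,'m) cat \<Rightarrow> 'm fmor \<Rightarrow> 'm fmor \<Rightarrow> 'm fmor" where
  "fcomp T n m = (fst n \<circ> fst m, \<lambda>i. cComp T (snd n (fst m i)) (snd m i))"

definition fid :: "('o,'m) cat \<Rightarrow> 'o list \<Rightarrow> 'm fmor" where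
  "fid T As = (\<lambda>i. i, \<lambda>i. cId T (As!i))"

definition is_fpullback :: "('o,'m) cat \<Rightarrow> 'o list \<Rightarrow> 'o list \<Rightarrow> 'o list \<Rightarrow> 'm fmor \<Rightarrow> 'm fmor
    \<Rightarrow> 'o list \<Rightarrow> 'm fmor \<Rightarrow> 'm fmor \<Rightarrow> bool" where
  "is_fpullback T A B C f g P p q \<longleftrightarrow>
     Fobj T P \<and> p \<in> fhom T P A \<and> q \<in> fhom T P B \<and> feq P (fcomp T f p) (fcomp T g q) \<and>
     (\<forall>Q p' q'. Fobj T Q \<and> p' \<in> fhom T Q A \<and> q' \<in> fhom T Q B \<and> feq Q (fcomp T f p') (fcomp T g q')
        \<longrightarrow> (\<exists>h\<in>fhom T Q P. feq Q (fcomp T p h) p' \<and> feq Q (fcomp T q h) q' \<and>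
              (\<forall>h'\<in>fhom T Q P. feq Q (fcomp T p h') p' \<and> feq Q (fcomp T q h') q' \<longrightarrow> feq Q h h')))"

definition orbital :: "('o,'m) cat \<Rightarrow> bool" where
  "orbital T \<longleftrightarrow> is_category T \<and>
     (\<forall>A B C f g. Fobj T A \<and> Fobj T B \<and> Fobj T C \<and> f \<in> fhom T A C \<and> g \<in> fhom T B C
        \<longrightarrow> (\<exists>P p q. is_fpullback T A B C f g P p q))"

text \<open>A summand inclusion A \<rightarrow> B in F_T (i.e. isomorphic to the inclusion of a summand):
injective on orbits and an isomorphism on each orbit.\<close>

definition summand_incl :: "('o,'m) cat \<Rightarrow> 'o list \<Rightarrow> 'o list \<Rightarrow> 'm fmor \<Rightarrow> bool" where
  "summand_incl T A B m \<longleftrightarrow> m \<in> fhom T A B \<and> inj_on (fst m) {..<length A} \<and>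
     (\<forall>i<length A. is_iso T (snd m i))"

text \<open>An object of F_V is a finite coproduct of representables with a map to V, i.e. a list
of arrows of T with codomain V.\<close>

definition sobj :: "('o,'m) cat \<Rightarrow> 'o \<Rightarrow> 'm list \<Rightarrow> bool" where
  "sobj T V S \<longleftrightarrow> V \<in> cOb T \<and> (\<forall>a\<in>set S. a \<in> cAr T \<and> cCod T a = V)"

definition doms :: "('o,'m) cat \<Rightarrow> 'm list \<Rightarrow> 'o list" where
  "doms T S = map (cDom T) S"

definition shom :: "('o,'m) cat \<Rightarrow> 'm list \<Rightarrow> 'm list \<Rightarrow> 'm fmor set" where
  "shom T S S' = {m \<in> fhom T (doms T S) (doms T S').
      \<forall>i<length S. cComp T (S'!(fst m i)) (snd m i) = S!i}"

definition s_iso :: "('o,'m) cat \<Rightarrow> 'o \<Rightarrow> 'm list \<Rightarrow> 'm list \<Rightarrow> bool" where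
  "s_iso T V S S' \<longleftrightarrow> sobj T V S \<and> sobj T V S' \<and>
     (\<exists>m\<in>shom T S S'. \<exists>n\<in>shom T S' S.
        feq (doms T S) (fcomp T n m) (fid T (doms T S)) \<and>
        feq (doms T S') (fcomp T m n) (fid T (doms T S')))"

text \<open>P is (a choice of) Res along a : U \<rightarrow> V of S in F_V: a pullback in F_T of S \<rightarrow> V \<leftarrow> U,
regarded as an object over U.\<close>

definition is_res :: "('o,'m) cat \<Rightarrow> 'm \<Rightarrow> 'm list \<Rightarrow> 'm list \<Rightarrow> bool" where
  "is_res T a S P \<longleftrightarrow> a \<in> cAr T \<and> sobj T (cCod T a) S \<and> sobj T (cDom T a) P \<and>
     (\<exists>q. is_fpullback T (doms T S) [cDom T a] [cCod T a] (\<lambda>i. 0, \<lambda>i. S!i) (\<lambda>i. 0, \<lambda>i. a)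
            (doms T P) q (\<lambda>i. 0, \<lambda>i. P!i))"

type_synonym ('o,'m) tsub = "'o \<Rightarrow> 'm list set"

definition full_Tsub :: "('o,'m) cat \<Rightarrow> ('o,'m) tsub \<Rightarrow> bool" where
  "full_Tsub T C \<longleftrightarrow>
     (\<forall>V S. S \<in> C V \<longrightarrow> sobj T V S) \<and>
     (\<forall>V S S'. S \<in> C V \<and> s_iso T V S S' \<longrightarrow> S' \<in> C V) \<and>
     (\<forall>a S P. a \<in> cAr T \<and> S \<in> C (cCod T a) \<and> is_res T a S P \<longrightarrow> P \<in> C (cDom T a))"

text \<open>The coproduct of Ind_{U_i}^V T_i over the orbits U_i of S.\<close>

definition tcoprod :: "('o,'m) cat \<Rightarrow> 'm list \<Rightarrow> 'm list list \<Rightarrow> 'm list" where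
  "tcoprod T S Ts = concat (map (\<lambda>i. map (cComp T (S!i)) (Ts!i)) [0..<length S])"

definition wIndSys :: "('o,'m) cat \<Rightarrow> ('o,'m) tsub \<Rightarrow> bool" where
  "wIndSys T C \<longleftrightarrow> full_Tsub T C \<and>
     (\<forall>V. C V \<noteq> {} \<longrightarrow> [cId T V] \<in> C V) \<and>
     (\<forall>V S Ts. S \<in> C V \<and> length Ts = length S \<and> (\<forall>i<length S. Ts!i \<in> C (cDom T (S!i)))
        \<longrightarrow> tcoprod T S Ts \<in> C V)"

definition unital :: "('o,'m) cat \<Rightarrow> ('o,'m) tsub \<Rightarrow> bool" where
  "unital T C \<longleftrightarrow> wIndSys T C \<and> (\<forall>V\<in>cOb T. C V \<noteq> {}) \<and>
     (\<forall>V S S'. S @ S' \<in> C V \<longrightarrow> S \<in> C V \<and> S' \<in> C V)"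

definition IndSys :: "('o,'m) cat \<Rightarrow> ('o,'m) tsub \<Rightarrow> bool" where
  "IndSys T C \<longleftrightarrow> unital T C \<and> (\<forall>V\<in>cOb T. [] \<in> C V) \<and>
     (\<forall>V S S'. S \<in> C V \<and> S' \<in> C V \<longrightarrow> S @ S' \<in> C V)"

definition transf :: "('o,'m) cat \<Rightarrow> 'm set \<Rightarrow> bool" where
  "transf T R \<longleftrightarrow> R \<subseteq> cAr T \<and> (\<forall>f. is_iso T f \<longrightarrow> f \<in> R) \<and>
     (\<forall>f g. f \<in> R \<and> g \<in> R \<and> cCod T f = cDom T g \<longrightarrow> cComp T g f \<in> R) \<and>
     (\<forall>v a' a u. v \<in> cAr T \<and> a' \<in> cAr T \<and> a \<in> R \<and> u \<in> cAr T \<and>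
        cDom T v = cDom T a' \<and> cCod T v = cDom T a \<and> cCod T a' = cDom T u \<and> cCod T a = cCod T u \<and>
        cComp T a v = cComp T u a' \<longrightarrow>
        (\<forall>P p q m. is_fpullback T [cDom T a] [cDom T u] [cCod T a] (\<lambda>i. 0, \<lambda>i. a) (\<lambda>i. 0, \<lambda>i. u) P p q \<and>
           m \<in> fhom T [cDom T v] P \<and>
           feq [cDom T v] (fcomp T p m) (\<lambda>i. 0, \<lambda>i. v) \<and>
           feq [cDom T v] (fcomp T q m) (\<lambda>i. 0, \<lambda>i. a') \<and>
           summand_incl T [cDom T v] P m \<longrightarrow> a' \<in> R))"

definition frakR :: "('o,'m) cat \<Rightarrow> ('o,'m) tsub \<Rightarrow> 'm set" where
  "frakR T C = {f \<in> cAr T. [f] \<in> C (cCod T f)}"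

definition Cl :: "('o,'m) cat \<Rightarrow> ('o,'m) tsub \<Rightarrow> ('o,'m) tsub" where
  "Cl T D = Inf {C. wIndSys T C \<and> D \<le> C}"

definition wjoin :: "('o,'m) cat \<Rightarrow> ('o,'m) tsub \<Rightarrow> ('o,'m) tsub \<Rightarrow> ('o,'m) tsub" where
  "wjoin T A B = Cl T (sup A B)"

definition F0 :: "('o,'m) cat \<Rightarrow> ('o,'m) tsub" where
  "F0 T V = {S. s_iso T V [] S \<or> s_iso T V [cId T V] S}"

definition Fbar :: "('o,'m) cat \<Rightarrow> 'm set \<Rightarrow> ('o,'m) tsub" where
  "Fbar T R = wjoin T (F0 T)
     (Cl T (\<lambda>V. {P. \<exists>f g. f \<in> R \<and> g \<in> cAr T \<and> cCod T g = cCod T f \<and> cDom T g = V \<and> is_res T g [f] P}))"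

end

theory Submission
  imports Defs
begin

context fixes T :: "('o,'m) cat" assumes cat: "is_category T" begin

lemma ar_dom: "f \<in> cAr T \<Longrightarrow> cDom T f \<in> cOb T" using cat unfolding is_category_def by blast
lemma ar_cod: "f \<in> cAr T \<Longrightarrow> cCod T f \<in> cOb T" using cat unfolding is_category_def by blast
lemma id_hom: "X \<in> cOb T \<Longrightarrow> cId T X \<in> hom T X X" using cat unfolding is_category_def by blast
lemma id_ar: "X \<in> cOb T \<Longrightarrow> cId T X \<in> cAr T" "X \<in> cOb T \<Longrightarrow> cDom T (cId T X) = X" "X \<in> cOb T \<Longrightarrow> cCod T (cId T X) = X"
  using id_hom unfolding hom_def by auto
lemma comp_hom: "f \<in> cAr T \<Longrightarrow> g \<in> cAr T \<Longrightarrow> cCod T f = cDom T g \<Longrightarrow> cComp T g f \<in> hom T (cDom T f) (cCod T g)"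
  using cat unfolding is_category_def by blast
lemma comp_ar: "f \<in> cAr T \<Longrightarrow> g \<in> cAr T \<Longrightarrow> cCod T f = cDom T g \<Longrightarrow> cComp T g f \<in> cAr T"
  "f \<in> cAr T \<Longrightarrow> g \<in> cAr T \<Longrightarrow> cCod T f = cDom T g \<Longrightarrow> cDom T (cComp T g f) = cDom T f"
  "f \<in> cAr T \<Longrightarrow> g \<in> cAr T \<Longrightarrow> cCod T f = cDom T g \<Longrightarrow> cCod T (cComp T g f) = cCod T g"
  using comp_hom unfolding hom_def by auto
lemma assoc: "f \<in> cAr T \<Longrightarrow> g \<in> cAr T \<Longrightarrow> h \<in> cAr T \<Longrightarrow> cCod T f = cDom T g \<Longrightarrow> cCod T g = cDom T h
   \<Longrightarrow> cComp T h (cComp T g f) = cComp T (cComp T h g) f"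
  using cat unfolding is_category_def by blast
lemma idl: "f \<in> cAr T \<Longrightarrow> cComp T (cId T (cCod T f)) f = f" using cat unfolding is_category_def by blast
lemma idr: "f \<in> cAr T \<Longrightarrow> cComp T f (cId T (cDom T f)) = f" using cat unfolding is_category_def by blast
lemma id_id: "X \<in> cOb T \<Longrightarrow> cComp T (cId T X) (cId T X) = cId T X"
  using idr[OF id_ar(1)] id_ar(2) by metis
lemma assoc': "f \<in> hom T X Y \<Longrightarrow> g \<in> hom T Y Z \<Longrightarrow> h \<in> hom T Z W \<Longrightarrow> cComp T h (cComp T g f) = cComp T (cComp T h g) f"
  using assoc unfolding hom_def by auto
lemma comp_hom': "f \<in> hom T X Y \<Longrightarrow> g \<in> hom T Y Z \<Longrightarrow> cComp T g f \<in> hom T X Z"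
  using comp_hom unfolding hom_def by auto
lemma idl': "f \<in> hom T X Y \<Longrightarrow> cComp T (cId T Y) f = f" using idl unfolding hom_def by auto
lemma idr': "f \<in> hom T X Y \<Longrightarrow> cComp T f (cId T X) = f" using idr unfolding hom_def by auto

end

lemma hom_iff: "f \<in> hom T X Y \<longleftrightarrow> f \<in> cAr T \<and> cDom T f = X \<and> cCod T f = Y" unfolding hom_def by auto

lemma feq1: "feq [x] m m' \<longleftrightarrow> fst m 0 = fst m' 0 \<and> snd m 0 = snd m' 0" unfolding feq_def by auto
lemma fhom1: "m \<in> fhom T [x] B \<longleftrightarrow> fst m 0 < length B \<and> snd m 0 \<in> hom T x (B!(fst m 0))" unfolding fhom_def by auto
lemma fcomp_simps: "fst (fcomp T n m) = fst n \<circ> fst m" "snd (fcomp T n m) i = cComp T (snd n (fst m i)) (snd m i)"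
  unfolding fcomp_def by auto


lemma tcoprod_set: "x \<in> set (tcoprod T S Ts) \<longleftrightarrow> (\<exists>i<length S. \<exists>t\<in>set (Ts!i). x = cComp T (S!i) t)"
  unfolding tcoprod_def by auto

lemma tcoprod_sobj:
  assumes cat: "is_category T" and "sobj T V S" "\<forall>i<length S. sobj T (cDom T (S!i)) (Ts!i)"
  shows "sobj T V (tcoprod T S Ts)"
proof -
  have "x \<in> cAr T \<and> cCod T x = V" if "x \<in> set (tcoprod T S Ts)" for x
  proof -
  from that obtain i t where i: "i < length S" "t \<in> set (Ts!i)" "x = cComp T (S!i) t" unfolding tcoprod_set by blast
  have Si: "S!i \<in> cAr T" "cCod T (S!i) = V" using assms(2) i unfolding sobj_def by auto
  have t: "t \<in> cAr T" "cCod T t = cDom T (S!i)" using assms(3) i unfolding sobj_def by auto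
  show "x \<in> cAr T \<and> cCod T x = V" using comp_ar[OF cat t(1) Si(1) t(2)] Si i by simp
  qed
  moreover have "V \<in> cOb T" using assms(2) unfolding sobj_def by blast
  ultimately show ?thesis unfolding sobj_def by blast
qed

lemma s_iso_sobj: "s_iso T V S S' \<Longrightarrow> sobj T V S \<and> sobj T V S'" unfolding s_iso_def by auto
lemma is_res_sobj: "is_res T a S P \<Longrightarrow> sobj T (cDom T a) P" unfolding is_res_def by auto

lemma wI_sobj: "wIndSys T C \<Longrightarrow> S \<in> C V \<Longrightarrow> sobj T V S" unfolding wIndSys_def full_Tsub_def by blast
lemma wI_iso: "wIndSys T C \<Longrightarrow> S \<in> C V \<Longrightarrow> s_iso T V S S' \<Longrightarrow> S' \<in> C V" unfolding wIndSys_def full_Tsub_def by blast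
lemma wI_res: "wIndSys T C \<Longrightarrow> a \<in> cAr T \<Longrightarrow> S \<in> C (cCod T a) \<Longrightarrow> is_res T a S P \<Longrightarrow> P \<in> C (cDom T a)"
  unfolding wIndSys_def full_Tsub_def by blast
lemma wI_id: "wIndSys T C \<Longrightarrow> C V \<noteq> {} \<Longrightarrow> [cId T V] \<in> C V" unfolding wIndSys_def by blast
lemma wI_tc: "wIndSys T C \<Longrightarrow> S \<in> C V \<Longrightarrow> length Ts = length S \<Longrightarrow> (\<And>i. i<length S \<Longrightarrow> Ts!i \<in> C (cDom T (S!i)))
  \<Longrightarrow> tcoprod T S Ts \<in> C V" unfolding wIndSys_def by blast
lemma wI_intro:
  assumes "\<And>V S. S \<in> C V \<Longrightarrow> sobj T V S" "\<And>V S S'. S \<in> C V \<Longrightarrow> s_iso T V S S' \<Longrightarrow> S' \<in> C V"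
   "\<And>a S P. a \<in> cAr T \<Longrightarrow> S \<in> C (cCod T a) \<Longrightarrow> is_res T a S P \<Longrightarrow> P \<in> C (cDom T a)"
   "\<And>V. C V \<noteq> {} \<Longrightarrow> [cId T V] \<in> C V"
   "\<And>V S Ts. S \<in> C V \<Longrightarrow> length Ts = length S \<Longrightarrow> (\<forall>i<length S. Ts!i \<in> C (cDom T (S!i))) \<Longrightarrow> tcoprod T S Ts \<in> C V"
  shows "wIndSys T C" unfolding wIndSys_def full_Tsub_def using assms by blast

lemma top_wInd: assumes cat: "is_category T" shows "wIndSys T (\<lambda>V. {X. sobj T V X})"
proof (rule wI_intro)
  fix V assume "{X. sobj T V X} \<noteq> {}"
  then have "V \<in> cOb T" unfolding sobj_def by auto
  then show "[cId T V] \<in> {X. sobj T V X}" using id_ar[OF cat] unfolding sobj_def by auto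
next
  fix V S Ts assume "S \<in> {X. sobj T V X}" "length Ts = length S" "(\<forall>i<length S. Ts ! i \<in> {X. sobj T (cDom T (S ! i)) X})"
  then show "tcoprod T S Ts \<in> {X. sobj T V X}" using tcoprod_sobj[OF cat] by auto
qed (auto dest: s_iso_sobj is_res_sobj)

lemma Inf_mem: "S \<in> Inf A V \<longleftrightarrow> (\<forall>C\<in>A. S \<in> C V)" by (simp add: Inf_fun_def)

lemma Inf_wInd: assumes ne: "A \<noteq> {}" and all: "\<And>C. C \<in> A \<Longrightarrow> wIndSys T C" shows "wIndSys T (Inf A)"
proof -
  obtain C0 where C0: "C0 \<in> A" using ne by blast
  show ?thesis
  proof (rule wI_intro)
    fix V S assume "S \<in> Inf A V"
    then have "S \<in> C0 V" using C0 unfolding Inf_mem by blast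
    then show "sobj T V S" by (rule wI_sobj[OF all[OF C0]])
  next
    fix V S S' assume a: "S \<in> Inf A V" "s_iso T V S S'"
    show "S' \<in> Inf A V" unfolding Inf_mem
    proof
      fix C assume C: "C \<in> A"
      from a(1) C have "S \<in> C V" unfolding Inf_mem by blast
      from wI_iso[OF all[OF C] this a(2)] show "S' \<in> C V" .
    qed
  next
    fix a S P assume a: "a \<in> cAr T" "S \<in> Inf A (cCod T a)" "is_res T a S P"
    show "P \<in> Inf A (cDom T a)" unfolding Inf_mem
    proof
      fix C assume C: "C \<in> A"
      from a(2) C have "S \<in> C (cCod T a)" unfolding Inf_mem by blast
      from wI_res[OF all[OF C] a(1) this a(3)] show "P \<in> C (cDom T a)" .
    qed
  next
    fix V assume a: "Inf A V \<noteq> {}"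
    then obtain S where S: "S \<in> Inf A V" by blast
    show "[cId T V] \<in> Inf A V" unfolding Inf_mem
    proof
      fix C assume C: "C \<in> A"
      from S C have "S \<in> C V" unfolding Inf_mem by blast
      then have "C V \<noteq> {}" by blast
      from wI_id[OF all[OF C] this] show "[cId T V] \<in> C V" .
    qed
  next
    fix V S Ts assume a: "S \<in> Inf A V" "length Ts = length S" "(\<forall>i<length S. Ts ! i \<in> Inf A (cDom T (S ! i)))"
    show "tcoprod T S Ts \<in> Inf A V" unfolding Inf_mem
    proof
      fix C assume C: "C \<in> A"
      from a(1) C have "S \<in> C V" unfolding Inf_mem by blast
      moreover have "\<And>i. i < length S \<Longrightarrow> Ts!i \<in> C (cDom T (S!i))" using a(3) C unfolding Inf_mem by blast
      ultimately show "tcoprod T S Ts \<in> C V" using wI_tc[OF all[OF C] _ a(2)] by blast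
    qed
  qed
qed

lemma Cl_props:
  assumes cat: "is_category T" and D: "\<forall>V S. S \<in> D V \<longrightarrow> sobj T V S"
  shows "wIndSys T (Cl T D)" "D \<le> Cl T D" "\<And>C. wIndSys T C \<Longrightarrow> D \<le> C \<Longrightarrow> Cl T D \<le> C"
proof -
  have ne: "{C. wIndSys T C \<and> D \<le> C} \<noteq> {}"
    using top_wInd[OF cat] D by (auto simp: le_fun_def)
  show "wIndSys T (Cl T D)" unfolding Cl_def by (rule Inf_wInd[OF ne]) blast
  show "D \<le> Cl T D" unfolding Cl_def by (rule Inf_greatest) auto
  show "\<And>C. wIndSys T C \<Longrightarrow> D \<le> C \<Longrightarrow> Cl T D \<le> C" unfolding Cl_def by (rule Inf_lower) auto
qed


lemma s_iso_sym: "s_iso T V S S' \<Longrightarrow> s_iso T V S' S" unfolding s_iso_def by blast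

lemma s_iso_refl: assumes cat: "is_category T" and S: "sobj T V S" shows "s_iso T V S S"
proof -
  have ar: "\<And>i. i < length S \<Longrightarrow> S!i \<in> cAr T \<and> cCod T (S!i) = V" using S unfolding sobj_def by auto
  have m: "fid T (doms T S) \<in> shom T S S"
    unfolding shom_def fhom_def fid_def doms_def
    using ar id_hom[OF cat] ar_dom[OF cat] idr[OF cat] by auto
  have f: "feq (doms T S) (fcomp T (fid T (doms T S)) (fid T (doms T S))) (fid T (doms T S))"
    unfolding feq_def fcomp_def fid_def doms_def
    using ar id_id[OF cat] ar_dom[OF cat] by auto
  show ?thesis unfolding s_iso_def
    apply (intro conjI S)
    apply (rule bexI[OF _ m])
    apply (rule bexI[OF _ m])
    by (rule conjI[OF f f])
qed

lemma s_iso_single: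
  assumes cat: "is_category T" and x: "x \<in> cAr T" "cCod T x = V" and e: "is_iso T e" "cCod T e = cDom T x"
  shows "s_iso T V [x] [cComp T x e]"
proof -
  obtain g where g: "g \<in> hom T (cCod T e) (cDom T e)" "cComp T g e = cId T (cDom T e)" "cComp T e g = cId T (cCod T e)"
    using e(1) unfolding is_iso_def by blast
  have ea: "e \<in> cAr T" using e(1) unfolding is_iso_def by blast
  have ga: "g \<in> cAr T" "cDom T g = cCod T e" "cCod T g = cDom T e" using g(1) unfolding hom_def by auto
  have xe: "cComp T x e \<in> cAr T" "cDom T (cComp T x e) = cDom T e" "cCod T (cComp T x e) = cCod T x"
    using comp_ar[OF cat ea x(1) e(2)] by auto
  have V: "V \<in> cOb T" using ar_cod[OF cat x(1)] x(2) by simp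
  have eq1: "cComp T (cComp T x e) g = x"
    using assoc[OF cat ga(1) ea x(1) ga(3) e(2)] g(3) e(2) idr[OF cat x(1)] by simp
  have m: "(\<lambda>i. 0, \<lambda>i. g) \<in> shom T [x] [cComp T x e]"
    unfolding shom_def fhom_def doms_def hom_def using ga xe e eq1 by auto
  have n: "(\<lambda>i. 0, \<lambda>i. e) \<in> shom T [cComp T x e] [x]"
    unfolding shom_def fhom_def doms_def hom_def using ea e xe by auto
  have f1: "feq (doms T [x]) (fcomp T (\<lambda>i. 0, \<lambda>i. e) (\<lambda>i. 0, \<lambda>i. g)) (fid T (doms T [x]))"
    unfolding feq_def fcomp_def fid_def doms_def using g(3) e(2) by auto
  have f2: "feq (doms T [cComp T x e]) (fcomp T (\<lambda>i. 0, \<lambda>i. g) (\<lambda>i. 0, \<lambda>i. e)) (fid T (doms T [cComp T x e]))"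
    unfolding feq_def fcomp_def fid_def doms_def using g(2) xe by auto
  have s1: "sobj T V [x]" "sobj T V [cComp T x e]" unfolding sobj_def using V x xe by auto
  show ?thesis unfolding s_iso_def
    apply (intro conjI s1)
    apply (rule bexI[OF _ m])
    apply (rule bexI[OF _ n])
    by (rule conjI[OF f1 f2])
qed

definition rho0 :: "('o,'m) cat \<Rightarrow> 'm set \<Rightarrow> ('o,'m) tsub" where
  "rho0 T R V = {S. sobj T V S \<and> set S \<subseteq> R}"

lemma unital_split: "unital T C \<Longrightarrow> S @ S' \<in> C V \<Longrightarrow> S \<in> C V \<and> S' \<in> C V" unfolding unital_def by blast
lemma unital_wI: "unital T C \<Longrightarrow> wIndSys T C" unfolding unital_def by blast
lemma unital_ne: "unital T C \<Longrightarrow> V \<in> cOb T \<Longrightarrow> C V \<noteq> {}" unfolding unital_def by blast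

lemma unital_single: assumes u: "unital T C" and S: "S \<in> C V" and x: "x \<in> set S" shows "[x] \<in> C V"
proof -
  obtain i where i: "i < length S" "S!i = x" using x by (auto simp: in_set_conv_nth)
  have "S = take i S @ ([x] @ drop (Suc i) S)" using id_take_nth_drop[OF i(1)] i(2) by simp
  then have "take i S @ ([x] @ drop (Suc i) S) \<in> C V" using S by simp
  then have "[x] @ drop (Suc i) S \<in> C V" using unital_split[OF u] by blast
  then show ?thesis using unital_split[OF u] by blast
qed

lemma unital_nil: assumes u: "unital T C" and V: "V \<in> cOb T" shows "[] \<in> C V"
proof -
  obtain S where "S \<in> C V" using unital_ne[OF u V] by blast
  then have "[] @ S \<in> C V" by simp
  then show ?thesis using unital_split[OF u] by blast
qed

lemma unital_idV: assumes u: "unital T C" and V: "V \<in> cOb T" shows "[cId T V] \<in> C V"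
  using wI_id[OF unital_wI[OF u] unital_ne[OF u V]] .

lemma IndSys_unital: "IndSys T C \<Longrightarrow> unital T C" unfolding IndSys_def by blast
lemma IndSys_app: "IndSys T C \<Longrightarrow> S \<in> C V \<Longrightarrow> S' \<in> C V \<Longrightarrow> S @ S' \<in> C V" unfolding IndSys_def by blast

lemma IndSys_eq_rho0: assumes cat: "is_category T" and I: "IndSys T C" shows "C = rho0 T (frakR T C)"
proof (rule ext, rule set_eqI)
  fix V S
  have u: "unital T C" using IndSys_unital[OF I] .
  show "S \<in> C V \<longleftrightarrow> S \<in> rho0 T (frakR T C) V"
  proof
    assume S: "S \<in> C V"
    have so: "sobj T V S" using wI_sobj[OF unital_wI[OF u] S] .
    have "set S \<subseteq> frakR T C"
    proof
      fix x assume x: "x \<in> set S"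
      have "[x] \<in> C V" using unital_single[OF u S x] .
      moreover have "x \<in> cAr T" "cCod T x = V" using so x unfolding sobj_def by auto
      ultimately show "x \<in> frakR T C" unfolding frakR_def by simp
    qed
    then show "S \<in> rho0 T (frakR T C) V" using so unfolding rho0_def by simp
  next
    assume "S \<in> rho0 T (frakR T C) V"
    then have so: "sobj T V S" and sub: "set S \<subseteq> frakR T C" unfolding rho0_def by auto
    then show "S \<in> C V"
    proof (induction S)
      case Nil
      then have "V \<in> cOb T" unfolding sobj_def by simp
      then show ?case using unital_nil[OF u] by blast
    next
      case (Cons x S)
      have "sobj T V S" using Cons.prems unfolding sobj_def by simp
      then have "S \<in> C V" using Cons by simp
      moreover have "[x] \<in> C V" using Cons.prems unfolding frakR_def sobj_def by auto
      ultimately have "[x] @ S \<in> C V" using IndSys_app[OF I] by blast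
      then show ?case by simp
    qed
  qed
qed

lemma transf_sub: "transf T R \<Longrightarrow> R \<subseteq> cAr T" unfolding transf_def by blast
lemma transf_iso: "transf T R \<Longrightarrow> is_iso T f \<Longrightarrow> f \<in> R" unfolding transf_def by blast
lemma transf_comp: "transf T R \<Longrightarrow> f \<in> R \<Longrightarrow> g \<in> R \<Longrightarrow> cCod T f = cDom T g \<Longrightarrow> cComp T g f \<in> R"
  unfolding transf_def by blast

lemma frakR_rho0: assumes cat: "is_category T" and R: "transf T R" shows "frakR T (rho0 T R) = R"
  using transf_sub[OF R] ar_cod[OF cat] unfolding frakR_def rho0_def sobj_def by auto

lemma rho0_iso: assumes cat: "is_category T" and R: "transf T R" and S: "S \<in> rho0 T R V" and iso: "s_iso T V S S'"
  shows "S' \<in> rho0 T R V"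
proof -
  obtain m n where mn: "m \<in> shom T S S'" "n \<in> shom T S' S"
      "feq (doms T S) (fcomp T n m) (fid T (doms T S))" "feq (doms T S') (fcomp T m n) (fid T (doms T S'))"
    using iso unfolding s_iso_def by blast
  have so: "sobj T V S'" using iso unfolding s_iso_def by blast
  have "S'!j \<in> R" if j: "j < length S'" for j
  proof -
    define i where "i = fst n j"
    have i: "i < length S" using mn(2) j unfolding shom_def fhom_def doms_def i_def by auto
    have nj: "snd n j \<in> hom T (cDom T (S'!j)) (cDom T (S!i))" using mn(2) j unfolding shom_def fhom_def doms_def i_def by auto
    have Sj: "cComp T (S!i) (snd n j) = S'!j" using mn(2) j unfolding shom_def i_def by auto
    have mi: "snd m i \<in> hom T (cDom T (S!i)) (cDom T (S'!(fst m i)))" using mn(1) i unfolding shom_def fhom_def doms_def by auto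
    have e1: "fst m i = j" "cComp T (snd m i) (snd n j) = cId T (cDom T (S'!j))"
      using mn(4) j unfolding feq_def fcomp_def fid_def doms_def i_def by auto
    have e2: "cComp T (snd n j) (snd m i) = cId T (cDom T (S!i))"
      using mn(3) i e1(1) unfolding feq_def fcomp_def fid_def doms_def by auto
    have isn: "is_iso T (snd n j)" unfolding is_iso_def
      using nj mi e1 e2 unfolding hom_def by auto
    have "S!i \<in> R" using S i unfolding rho0_def by auto
    moreover have "snd n j \<in> R" using transf_iso[OF R isn] .
    moreover have "cCod T (snd n j) = cDom T (S!i)" using nj unfolding hom_def by simp
    ultimately have "cComp T (S!i) (snd n j) \<in> R" using transf_comp[OF R] by blast
    then show ?thesis using Sj by simp
  qed
  have "set S' \<subseteq> R"
  proof
    fix x assume "x \<in> set S'"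
    then obtain j where "j < length S'" "x = S'!j" by (auto simp: in_set_conv_nth)
    then show "x \<in> R" using \<open>\<And>j. j < length S' \<Longrightarrow> S'!j \<in> R\<close> by simp
  qed
  then show ?thesis using so unfolding rho0_def by simp
qed


lemma concat_sel: "concat (map (\<lambda>i. if P i then [g i] else []) xs) = map g (filter P xs)"
  by (induction xs) auto

lemma tcoprod_sel:
  assumes cat: "is_category T" and L: "sobj T V L"
  shows "tcoprod T L (map (\<lambda>i. if P i then [cId T (cDom T (L!i))] else []) [0..<length L]) = map (\<lambda>i. L!i) (filter P [0..<length L])"
proof -
  have ar: "\<And>i. i < length L \<Longrightarrow> L!i \<in> cAr T" using L unfolding sobj_def by auto
  have "tcoprod T L (map (\<lambda>i. if P i then [cId T (cDom T (L!i))] else []) [0..<length L])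
      = concat (map (\<lambda>i. if P i then [L!i] else []) [0..<length L])"
    unfolding tcoprod_def
    by (rule arg_cong[where f=concat], rule map_cong) (auto simp: idr[OF cat ar])
  also have "\<dots> = map (\<lambda>i. L!i) (filter P [0..<length L])" by (rule concat_sel)
  finally show ?thesis .
qed

lemma filter_lt: "m \<le> n \<Longrightarrow> filter (\<lambda>i. i < m) [0..<n] = [0..<m]"
proof -
  assume "m \<le> n"
  then have "[0..<n] = [0..<m] @ [m..<n]" by (metis le0 upt_add_eq_append le_add_diff_inverse)
  then show ?thesis by simp
qed
lemma filter_ge: "m \<le> n \<Longrightarrow> filter (\<lambda>i. \<not> i < m) [0..<n] = [m..<n]"
proof -
  assume "m \<le> n"
  then have "[0..<n] = [0..<m] @ [m..<n]" by (metis le0 upt_add_eq_append le_add_diff_inverse)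
  then show ?thesis by simp
qed

lemma wI_split:
  assumes cat: "is_category T" and w: "wIndSys T C" and F: "\<And>U. U \<in> cOb T \<Longrightarrow> [] \<in> C U \<and> [cId T U] \<in> C U"
    and SS: "S @ S' \<in> C V"
  shows "S \<in> C V \<and> S' \<in> C V"
proof -
  let ?L = "S @ S'"
  have L: "sobj T V ?L" using wI_sobj[OF w SS] .
  have ob: "cDom T (?L!i) \<in> cOb T" if "i < length ?L" for i
  proof -
    have "?L!i \<in> set ?L" using nth_mem[OF that] .
    then have "?L!i \<in> cAr T" using L unfolding sobj_def by blast
    then show ?thesis using ar_dom[OF cat] by blast
  qed
  have gen: "tcoprod T ?L (map (\<lambda>i. if P i then [cId T (cDom T (?L!i))] else []) [0..<length ?L]) \<in> C V" for P
    apply (rule wI_tc[OF w SS])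
    using F ob by auto
  have f1: "filter (\<lambda>i. i < length S) [0..<length ?L] = [0..<length S]" by (rule filter_lt) simp
  have f2: "filter (\<lambda>i. \<not> i < length S) [0..<length ?L] = [length S..<length ?L]" by (rule filter_ge) simp
  have "tcoprod T ?L (map (\<lambda>i. if i < length S then [cId T (cDom T (?L!i))] else []) [0..<length ?L]) = S"
    unfolding tcoprod_sel[OF cat L] f1
    by (rule nth_equalityI) (auto simp: nth_append)
  moreover have "tcoprod T ?L (map (\<lambda>i. if \<not> i < length S then [cId T (cDom T (?L!i))] else []) [0..<length ?L]) = S'"
    unfolding tcoprod_sel[OF cat L] f2
    by (rule nth_equalityI) (auto simp: nth_append)
  ultimately show ?thesis using gen[of "\<lambda>i. i < length S"] gen[of "\<lambda>i. \<not> i < length S"] by simp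
qed


lemma pb_parts: "is_fpullback T A B C f g P p q \<Longrightarrow> Fobj T P \<and> p \<in> fhom T P A \<and> q \<in> fhom T P B \<and> feq P (fcomp T f p) (fcomp T g q)"
  unfolding is_fpullback_def by blast

lemma pb_univ: "is_fpullback T A B C f g P p q \<Longrightarrow> Fobj T Q \<Longrightarrow> p' \<in> fhom T Q A \<Longrightarrow> q' \<in> fhom T Q B \<Longrightarrow> feq Q (fcomp T f p') (fcomp T g q')
  \<Longrightarrow> \<exists>h\<in>fhom T Q P. feq Q (fcomp T p h) p' \<and> feq Q (fcomp T q h) q'"
  unfolding is_fpullback_def by blast

lemma feq_trans: "feq Q a b \<Longrightarrow> feq Q b c \<Longrightarrow> feq Q a c" unfolding feq_def by auto
lemma feq_sym: "feq Q a b \<Longrightarrow> feq Q b a" unfolding feq_def by auto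

lemma pb_uniq:
  assumes pb: "is_fpullback T A B C f g P p q" and Q: "Fobj T Q" "p' \<in> fhom T Q A" "q' \<in> fhom T Q B" "feq Q (fcomp T f p') (fcomp T g q')"
    and h1: "h1 \<in> fhom T Q P" "feq Q (fcomp T p h1) p'" "feq Q (fcomp T q h1) q'"
    and h2: "h2 \<in> fhom T Q P" "feq Q (fcomp T p h2) p'" "feq Q (fcomp T q h2) q'"
  shows "feq Q h1 h2"
proof -
  have "\<exists>h\<in>fhom T Q P. feq Q (fcomp T p h) p' \<and> feq Q (fcomp T q h) q' \<and>
              (\<forall>h'\<in>fhom T Q P. feq Q (fcomp T p h') p' \<and> feq Q (fcomp T q h') q' \<longrightarrow> feq Q h h')"
    using pb Q unfolding is_fpullback_def by blast
  then obtain h where h: "\<forall>h'\<in>fhom T Q P. feq Q (fcomp T p h') p' \<and> feq Q (fcomp T q h') q' \<longrightarrow> feq Q h h'" by blast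
  have "feq Q h h1" using h h1 by blast
  moreover have "feq Q h h2" using h h2 by blast
  ultimately show ?thesis using feq_sym feq_trans by blast
qed

lemma is_res_id: assumes cat: "is_category T" and f: "f \<in> cAr T" shows "is_res T (cId T (cCod T f)) [f] [f]"
proof -
  define X where "X = cDom T f"
  define Y where "Y = cCod T f"
  have XY: "X \<in> cOb T" "Y \<in> cOb T" using ar_dom[OF cat f] ar_cod[OF cat f] X_def Y_def by auto
  have fh: "f \<in> hom T X Y" using f X_def Y_def unfolding hom_def by simp
  have idY: "cId T Y \<in> cAr T" "cDom T (cId T Y) = Y" "cCod T (cId T Y) = Y" using id_ar[OF cat XY(2)] by auto
  have dom: "doms T [f] = [X]" unfolding doms_def X_def by simp
  define q0 where "q0 = ((\<lambda>i. 0, \<lambda>i. cId T X) :: 'b fmor)"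
  have pb: "is_fpullback T [X] [Y] [Y] (\<lambda>i. 0, \<lambda>i. [f]!i) (\<lambda>i. 0, \<lambda>i. cId T Y) [X] q0 (\<lambda>i. 0, \<lambda>i. [f]!i)"
    unfolding is_fpullback_def
  proof (intro conjI allI impI)
    show "Fobj T [X]" unfolding Fobj_def using XY by simp
    show "q0 \<in> fhom T [X] [X]" unfolding q0_def fhom_def using id_hom[OF cat XY(1)] by simp
    show "(\<lambda>i. 0, \<lambda>i. [f]!i) \<in> fhom T [X] [Y]" unfolding fhom_def using fh by simp
    show "feq [X] (fcomp T (\<lambda>i. 0, \<lambda>i. [f] ! i) q0) (fcomp T (\<lambda>i. 0, \<lambda>i. cId T Y) (\<lambda>i. 0, \<lambda>i. [f] ! i))"
      unfolding feq_def fcomp_def q0_def using idr'[OF cat fh] idl'[OF cat fh] by simp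
  next
    fix Q p' q'
    assume a: "Fobj T Q \<and> p' \<in> fhom T Q [X] \<and> q' \<in> fhom T Q [Y] \<and>
         feq Q (fcomp T (\<lambda>i. 0, \<lambda>i. [f] ! i) p') (fcomp T (\<lambda>i. 0, \<lambda>i. cId T Y) q')"
    have p'i: "fst p' i = 0" "snd p' i \<in> hom T (Q!i) X" if "i < length Q" for i
      using a that unfolding fhom_def by auto
    have q'i: "fst q' i = 0" "snd q' i \<in> hom T (Q!i) Y" if "i < length Q" for i
      using a that unfolding fhom_def by auto
    have c: "cComp T f (snd p' i) = snd q' i" if "i < length Q" for i
    proof -
      have "cComp T ([f] ! (fst p' i)) (snd p' i) = cComp T (cId T Y) (snd q' i)"
        using a that unfolding feq_def fcomp_def by auto
      then show ?thesis using p'i[OF that] idl'[OF cat q'i(2)[OF that]] by simp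
    qed
    show "\<exists>h\<in>fhom T Q [X]. feq Q (fcomp T q0 h) p' \<and> feq Q (fcomp T (\<lambda>i. 0, \<lambda>i. [f] ! i) h) q' \<and>
          (\<forall>h'\<in>fhom T Q [X]. feq Q (fcomp T q0 h') p' \<and> feq Q (fcomp T (\<lambda>i. 0, \<lambda>i. [f] ! i) h') q' \<longrightarrow> feq Q h h')"
    proof (rule bexI[of _ p'], intro conjI ballI impI)
      show "p' \<in> fhom T Q [X]" using a by blast
      show "feq Q (fcomp T q0 p') p'" unfolding feq_def fcomp_def q0_def by (auto simp: idl'[OF cat p'i(2)] p'i(1))
      show "feq Q (fcomp T (\<lambda>i. 0, \<lambda>i. [f] ! i) p') q'" unfolding feq_def fcomp_def using p'i q'i c by auto
    next
      fix h' assume h': "h' \<in> fhom T Q [X]" "feq Q (fcomp T q0 h') p' \<and> feq Q (fcomp T (\<lambda>i. 0, \<lambda>i. [f] ! i) h') q'"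
      have h1: "fst h' i = 0" "snd h' i \<in> hom T (Q!i) X" if "i < length Q" for i
        using h'(1) that unfolding fhom_def by auto
      have h2: "cComp T (cId T X) (snd h' i) = snd p' i" if "i < length Q" for i
        using h'(2) that unfolding feq_def fcomp_def q0_def by auto
      have "snd h' i = snd p' i" if "i < length Q" for i
        using h2[OF that] idl'[OF cat h1(2)[OF that]] by simp
      then show "feq Q p' h'" unfolding feq_def using h1 p'i by auto
    qed
  qed
  show ?thesis unfolding is_res_def
  proof (intro conjI)
    show "cId T (cCod T f) \<in> cAr T" using idY Y_def by simp
    show "sobj T (cCod T (cId T (cCod T f))) [f]" unfolding sobj_def using idY Y_def f XY by simp
    show "sobj T (cDom T (cId T (cCod T f))) [f]" unfolding sobj_def using idY Y_def f XY by simp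
    show "\<exists>q. is_fpullback T (doms T [f]) [cDom T (cId T (cCod T f))] [cCod T (cId T (cCod T f))]
          (\<lambda>i. 0, \<lambda>i. [f] ! i) (\<lambda>i. 0, \<lambda>i. cId T (cCod T f)) (doms T [f]) q (\<lambda>i. 0, \<lambda>i. [f] ! i)"
      unfolding dom idY(2,3)[unfolded Y_def] using pb[unfolded Y_def] by blast
  qed
qed


lemma orbital_cat: "orbital T \<Longrightarrow> is_category T" unfolding orbital_def by blast

lemma transf_rule:
  assumes R: "transf T R" and c: "v \<in> cAr T" "a' \<in> cAr T" "a \<in> R" "u \<in> cAr T"
    "cDom T v = cDom T a'" "cCod T v = cDom T a" "cCod T a' = cDom T u" "cCod T a = cCod T u"
    "cComp T a v = cComp T u a'"
    and pb: "is_fpullback T [cDom T a] [cDom T u] [cCod T a] (\<lambda>i. 0, \<lambda>i. a) (\<lambda>i. 0, \<lambda>i. u) P p q"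
    and m: "m \<in> fhom T [cDom T v] P" "feq [cDom T v] (fcomp T p m) (\<lambda>i. 0, \<lambda>i. v)"
      "feq [cDom T v] (fcomp T q m) (\<lambda>i. 0, \<lambda>i. a')" "summand_incl T [cDom T v] P m"
  shows "a' \<in> R"
proof -
  have H: "\<forall>v a' a u. v \<in> cAr T \<and> a' \<in> cAr T \<and> a \<in> R \<and> u \<in> cAr T \<and>
        cDom T v = cDom T a' \<and> cCod T v = cDom T a \<and> cCod T a' = cDom T u \<and> cCod T a = cCod T u \<and>
        cComp T a v = cComp T u a' \<longrightarrow>
        (\<forall>P p q m. is_fpullback T [cDom T a] [cDom T u] [cCod T a] (\<lambda>i. 0, \<lambda>i. a) (\<lambda>i. 0, \<lambda>i. u) P p q \<and>
           m \<in> fhom T [cDom T v] P \<and>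
           feq [cDom T v] (fcomp T p m) (\<lambda>i. 0, \<lambda>i. v) \<and>
           feq [cDom T v] (fcomp T q m) (\<lambda>i. 0, \<lambda>i. a') \<and>
           summand_incl T [cDom T v] P m \<longrightarrow> a' \<in> R)"
    using R unfolding transf_def by blast
  have H1: "\<forall>P p q m. is_fpullback T [cDom T a] [cDom T u] [cCod T a] (\<lambda>i. 0, \<lambda>i. a) (\<lambda>i. 0, \<lambda>i. u) P p q \<and>
           m \<in> fhom T [cDom T v] P \<and>
           feq [cDom T v] (fcomp T p m) (\<lambda>i. 0, \<lambda>i. v) \<and>
           feq [cDom T v] (fcomp T q m) (\<lambda>i. 0, \<lambda>i. a') \<and>
           summand_incl T [cDom T v] P m \<longrightarrow> a' \<in> R"
    using spec[OF spec[OF spec[OF spec[OF H, of v], of a'], of a], of u] c by blast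
  show ?thesis using spec[OF spec[OF spec[OF spec[OF H1, of P], of p], of q], of m] pb m by blast
qed

lemma doms_nth: "i < length S \<Longrightarrow> doms T S ! i = cDom T (S!i)" "length (doms T S) = length S"
  unfolding doms_def by auto

lemma fcomp_fst: "fst (fcomp T n m) i = fst n (fst m i)" unfolding fcomp_def by simp
lemma fcomp_snd: "snd (fcomp T n m) i = cComp T (snd n (fst m i)) (snd m i)" unfolding fcomp_def by simp

lemma rho0_res:
  assumes orb: "orbital T" and R: "transf T R" and a: "a \<in> cAr T" and S: "S \<in> rho0 T R (cCod T a)" and P: "is_res T a S P"
  shows "P \<in> rho0 T R (cDom T a)"
proof -
  have cat: "is_category T" using orbital_cat[OF orb] .
  have soS: "sobj T (cCod T a) S" and SR: "set S \<subseteq> R" using S unfolding rho0_def by auto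
  have soP: "sobj T (cDom T a) P" using P unfolding is_res_def by blast
  obtain q0 where pb: "is_fpullback T (doms T S) [cDom T a] [cCod T a] (\<lambda>i. 0, \<lambda>i. S!i) (\<lambda>i. 0, \<lambda>i. a) (doms T P) q0 (\<lambda>i. 0, \<lambda>i. P!i)"
    using P unfolding is_res_def by blast
  note pbp = pb_parts[OF pb]
  have PkR: "P!k \<in> R" if k: "k < length P" for k
  proof -
    define i where "i = fst q0 k"
    define pk where "pk = snd q0 k"
    have i: "i < length S" "pk \<in> hom T (cDom T (P!k)) (cDom T (S!i))"
      using pbp k unfolding fhom_def i_def pk_def by (auto simp: doms_nth)
    have Pk: "P!k \<in> hom T (cDom T (P!k)) (cDom T a)" using soP k unfolding sobj_def hom_def by auto
    have Si: "S!i \<in> hom T (cDom T (S!i)) (cCod T a)" "S!i \<in> R" using soS SR i(1) unfolding sobj_def hom_def by auto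
    have ah: "a \<in> hom T (cDom T a) (cCod T a)" using a unfolding hom_def by simp
    have comm: "cComp T (S!i) pk = cComp T a (P!k)"
      using pbp k unfolding feq_def fcomp_def i_def pk_def by (auto simp: doms_nth)
    have obs: "cDom T (S!i) \<in> cOb T" "cDom T a \<in> cOb T" "cCod T a \<in> cOb T" "cDom T (P!k) \<in> cOb T"
      using Si(1) ah Pk ar_dom[OF cat] ar_cod[OF cat] unfolding hom_def by auto
    have Sicod: "cCod T (S!i) = cCod T a" using Si(1) unfolding hom_def by simp
    obtain P2 p2 q2 where pb2: "is_fpullback T [cDom T (S!i)] [cDom T a] [cCod T (S!i)] (\<lambda>j. 0, \<lambda>j. S!i) (\<lambda>j. 0, \<lambda>j. a) P2 p2 q2"
    proof -
      have "\<exists>P p q. is_fpullback T [cDom T (S!i)] [cDom T a] [cCod T (S!i)] (\<lambda>j. 0, \<lambda>j. S!i) (\<lambda>j. 0, \<lambda>j. a) P p q"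
      proof -
        have H: "\<forall>A B C f g. Fobj T A \<and> Fobj T B \<and> Fobj T C \<and> f \<in> fhom T A C \<and> g \<in> fhom T B C
          \<longrightarrow> (\<exists>P p q. is_fpullback T A B C f g P p q)" using orb unfolding orbital_def by blast
        have "Fobj T [cDom T (S!i)]" "Fobj T [cDom T a]" "Fobj T [cCod T (S!i)]" unfolding Fobj_def using obs Sicod by auto
        moreover have "(\<lambda>j. 0, \<lambda>j. S!i) \<in> fhom T [cDom T (S!i)] [cCod T (S!i)]" unfolding fhom_def using Si(1) Sicod by simp
        moreover have "(\<lambda>j. 0, \<lambda>j. a) \<in> fhom T [cDom T a] [cCod T (S!i)]" unfolding fhom_def using ah Sicod by simp
        ultimately show ?thesis using H by blast
      qed
      then show ?thesis using that by blast
    qed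
    note pb2p = pb_parts[OF pb2]
    have p2j: "fst p2 j = 0" "snd p2 j \<in> hom T (P2!j) (cDom T (S!i))" if "j < length P2" for j
      using pb2p that unfolding fhom_def by auto
    have q2j: "fst q2 j = 0" "snd q2 j \<in> hom T (P2!j) (cDom T a)" if "j < length P2" for j
      using pb2p that unfolding fhom_def by auto
    have comm2: "cComp T (S!i) (snd p2 j) = cComp T a (snd q2 j)" if "j < length P2" for j
      using pb2p that unfolding feq_def fcomp_def by auto
    define Q where "Q = [cDom T (P!k)]"
    have FQ: "Fobj T Q" unfolding Q_def Fobj_def using obs by simp
    have "\<exists>h\<in>fhom T Q P2. feq Q (fcomp T p2 h) (\<lambda>j. 0, \<lambda>j. pk) \<and> feq Q (fcomp T q2 h) (\<lambda>j. 0, \<lambda>j. P!k)"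
    proof (rule pb_univ[OF pb2 FQ])
      show "(\<lambda>j. 0, \<lambda>j. pk) \<in> fhom T Q [cDom T (S ! i)]" unfolding Q_def fhom_def using i(2) by simp
      show "(\<lambda>j. 0, \<lambda>j. P ! k) \<in> fhom T Q [cDom T a]" unfolding Q_def fhom_def using Pk by simp
      show "feq Q (fcomp T (\<lambda>j. 0, \<lambda>j. S ! i) (\<lambda>j. 0, \<lambda>j. pk)) (fcomp T (\<lambda>j. 0, \<lambda>j. a) (\<lambda>j. 0, \<lambda>j. P ! k))"
        unfolding Q_def feq_def fcomp_def using comm by simp
    qed
    then obtain h where h: "h \<in> fhom T Q P2" "feq Q (fcomp T p2 h) (\<lambda>j. 0, \<lambda>j. pk)" "feq Q (fcomp T q2 h) (\<lambda>j. 0, \<lambda>j. P!k)"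
      by blast
    define j0 where "j0 = fst h 0"
    define e where "e = snd h 0"
    have j0: "j0 < length P2" "e \<in> hom T (cDom T (P!k)) (P2!j0)" using h(1) unfolding Q_def fhom_def j0_def e_def by auto
    have he1: "cComp T (snd p2 j0) e = pk" using h(2) unfolding Q_def feq_def fcomp_def j0_def e_def by auto
    have he2: "cComp T (snd q2 j0) e = P!k" using h(3) unfolding Q_def feq_def fcomp_def j0_def e_def by auto
    have "\<exists>h'\<in>fhom T P2 (doms T P). feq P2 (fcomp T q0 h') (\<lambda>j. i, \<lambda>j. snd p2 j) \<and> feq P2 (fcomp T (\<lambda>i. 0, \<lambda>i. P!i) h') q2"
    proof (rule pb_univ[OF pb])
      show "Fobj T P2" using pb2p by blast
      show "(\<lambda>j. i, \<lambda>j. snd p2 j) \<in> fhom T P2 (doms T S)" unfolding fhom_def using i(1) p2j by (auto simp: doms_nth)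
      show "q2 \<in> fhom T P2 [cDom T a]" using pb2p by blast
      show "feq P2 (fcomp T (\<lambda>i. 0, \<lambda>i. S ! i) (\<lambda>j. i, \<lambda>j. snd p2 j)) (fcomp T (\<lambda>i. 0, \<lambda>i. a) q2)"
        unfolding feq_def fcomp_def using comm2 by auto
    qed
    then obtain h' where h': "h' \<in> fhom T P2 (doms T P)" "feq P2 (fcomp T q0 h') (\<lambda>j. i, \<lambda>j. snd p2 j)"
      "feq P2 (fcomp T (\<lambda>i. 0, \<lambda>i. P!i) h') q2" by blast
    define k' where "k' = fst h' j0"
    define e' where "e' = snd h' j0"
    have k': "k' < length P" "e' \<in> hom T (P2!j0) (cDom T (P!k'))" using h' j0 unfolding fhom_def k'_def e'_def by (auto simp: doms_nth)
    have hk1: "fst q0 k' = i" "cComp T (snd q0 k') e' = snd p2 j0"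
      using h'(2) j0 unfolding feq_def fcomp_def k'_def e'_def by auto
    have hk2: "cComp T (P!k') e' = snd q2 j0"
      using h'(3) j0 unfolding feq_def fcomp_def k'_def e'_def by auto
    have q0k': "snd q0 k' \<in> hom T (cDom T (P!k')) (cDom T (S!i))" using pbp k'(1) hk1(1) unfolding fhom_def by (auto simp: doms_nth)
    have Pk': "P!k' \<in> hom T (cDom T (P!k')) (cDom T a)" using soP k'(1) unfolding sobj_def hom_def by auto
    have c1: "k' = k \<and> cComp T e' e = cId T (cDom T (P!k))"
    proof -
      have fe: "feq Q (\<lambda>x. k, \<lambda>x. cId T (cDom T (P!k))) (\<lambda>x. k', \<lambda>x. cComp T e' e)"
      proof (rule pb_uniq[OF pb FQ])
        show "(\<lambda>x. i, \<lambda>x. pk) \<in> fhom T Q (doms T S)" unfolding Q_def fhom_def using i by (auto simp: doms_nth)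
        show "(\<lambda>x. 0, \<lambda>x. P ! k) \<in> fhom T Q [cDom T a]" unfolding Q_def fhom_def using Pk by simp
        show "feq Q (fcomp T (\<lambda>i. 0, \<lambda>i. S ! i) (\<lambda>x. i, \<lambda>x. pk)) (fcomp T (\<lambda>i. 0, \<lambda>i. a) (\<lambda>x. 0, \<lambda>x. P ! k))"
          unfolding Q_def feq_def fcomp_def using comm by simp
        show "(\<lambda>x. k, \<lambda>x. cId T (cDom T (P ! k))) \<in> fhom T Q (doms T P)"
          unfolding Q_def fhom_def using k id_hom[OF cat obs(4)] by (auto simp: doms_nth)
        show "feq Q (fcomp T q0 (\<lambda>x. k, \<lambda>x. cId T (cDom T (P ! k)))) (\<lambda>x. i, \<lambda>x. pk)"
          unfolding Q_def feq_def fcomp_def using idr'[OF cat i(2)] by (simp add: i_def pk_def)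
        show "feq Q (fcomp T (\<lambda>i. 0, \<lambda>i. P ! i) (\<lambda>x. k, \<lambda>x. cId T (cDom T (P ! k)))) (\<lambda>x. 0, \<lambda>x. P ! k)"
          unfolding Q_def feq_def fcomp_def using idr'[OF cat Pk] by simp
        show "(\<lambda>x. k', \<lambda>x. cComp T e' e) \<in> fhom T Q (doms T P)"
          unfolding Q_def fhom_def using k' comp_hom'[OF cat j0(2) k'(2)] by (auto simp: doms_nth)
        show "feq Q (fcomp T q0 (\<lambda>x. k', \<lambda>x. cComp T e' e)) (\<lambda>x. i, \<lambda>x. pk)"
          unfolding Q_def feq_def fcomp_def using hk1 assoc'[OF cat j0(2) k'(2) q0k'] he1 by simp
        show "feq Q (fcomp T (\<lambda>i. 0, \<lambda>i. P ! i) (\<lambda>x. k', \<lambda>x. cComp T e' e)) (\<lambda>x. 0, \<lambda>x. P ! k)"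
          unfolding Q_def feq_def fcomp_def using hk2 assoc'[OF cat j0(2) k'(2) Pk'] he2 by simp
      qed
      then have fe1: "fst (\<lambda>x::nat. k, \<lambda>x::nat. cId T (cDom T (P!k))) 0 = fst (\<lambda>x::nat. k', \<lambda>x::nat. cComp T e' e) 0 \<and>
         snd (\<lambda>x::nat. k, \<lambda>x::nat. cId T (cDom T (P!k))) 0 = snd (\<lambda>x::nat. k', \<lambda>x::nat. cComp T e' e) 0"
        unfolding Q_def feq1 .
      have "k = k'" using conjunct1[OF fe1] by (simp only: fst_conv)
      moreover have "cId T (cDom T (P!k)) = cComp T e' e" using conjunct2[OF fe1] by (simp only: snd_conv)
      ultimately show ?thesis by simp
    qed
    have e'h: "e' \<in> hom T (P2!j0) (cDom T (P!k))" using k'(2) c1 by simp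
    have obj0: "P2!j0 \<in> cOb T" using pb2p j0(1) unfolding Fobj_def by auto
    define Q2 where "Q2 = [P2!j0]"
    have FQ2: "Fobj T Q2" unfolding Q2_def Fobj_def using obj0 by simp
    have c2: "cComp T e e' = cId T (P2!j0)"
    proof -
      have fe: "feq Q2 (\<lambda>x. j0, \<lambda>x. cId T (P2!j0)) (\<lambda>x. j0, \<lambda>x. cComp T e e')"
      proof (rule pb_uniq[OF pb2 FQ2])
        show "(\<lambda>x. 0, \<lambda>x. snd p2 j0) \<in> fhom T Q2 [cDom T (S ! i)]" unfolding Q2_def fhom_def using p2j[OF j0(1)] by simp
        show "(\<lambda>x. 0, \<lambda>x. snd q2 j0) \<in> fhom T Q2 [cDom T a]" unfolding Q2_def fhom_def using q2j[OF j0(1)] by simp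
        show "feq Q2 (fcomp T (\<lambda>j. 0, \<lambda>j. S ! i) (\<lambda>x. 0, \<lambda>x. snd p2 j0)) (fcomp T (\<lambda>j. 0, \<lambda>j. a) (\<lambda>x. 0, \<lambda>x. snd q2 j0))"
          unfolding Q2_def feq_def fcomp_def using comm2[OF j0(1)] by simp
        show "(\<lambda>x. j0, \<lambda>x. cId T (P2 ! j0)) \<in> fhom T Q2 P2" unfolding Q2_def fhom_def using j0(1) id_hom[OF cat obj0] by simp
        show "feq Q2 (fcomp T p2 (\<lambda>x. j0, \<lambda>x. cId T (P2 ! j0))) (\<lambda>x. 0, \<lambda>x. snd p2 j0)"
          unfolding Q2_def feq_def fcomp_def using p2j[OF j0(1)] idr'[OF cat p2j(2)[OF j0(1)]] by simp
        show "feq Q2 (fcomp T q2 (\<lambda>x. j0, \<lambda>x. cId T (P2 ! j0))) (\<lambda>x. 0, \<lambda>x. snd q2 j0)"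
          unfolding Q2_def feq_def fcomp_def using q2j[OF j0(1)] idr'[OF cat q2j(2)[OF j0(1)]] by simp
        show "(\<lambda>x. j0, \<lambda>x. cComp T e e') \<in> fhom T Q2 P2" unfolding Q2_def fhom_def using j0 comp_hom'[OF cat e'h j0(2)] by simp
        have "cComp T (snd p2 j0) (cComp T e e') = snd p2 j0"
          using assoc'[OF cat e'h j0(2) p2j(2)[OF j0(1)]] he1 hk1 c1 unfolding pk_def by simp
        then show "feq Q2 (fcomp T p2 (\<lambda>x. j0, \<lambda>x. cComp T e e')) (\<lambda>x. 0, \<lambda>x. snd p2 j0)"
          unfolding Q2_def feq_def fcomp_def using p2j[OF j0(1)] by simp
        have "cComp T (snd q2 j0) (cComp T e e') = snd q2 j0"
          using assoc'[OF cat e'h j0(2) q2j(2)[OF j0(1)]] he2 hk2 c1 by simp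
        then show "feq Q2 (fcomp T q2 (\<lambda>x. j0, \<lambda>x. cComp T e e')) (\<lambda>x. 0, \<lambda>x. snd q2 j0)"
          unfolding Q2_def feq_def fcomp_def using q2j[OF j0(1)] by simp
      qed
      then show ?thesis unfolding Q2_def feq_def by simp
    qed
    have eiso: "is_iso T e" unfolding is_iso_def
      using j0(2) e'h c1 c2 unfolding hom_def by auto
    have dpk: "cDom T pk = cDom T (P!k)" using i(2) unfolding hom_def by simp
    show "P!k \<in> R"
    proof (rule transf_rule[OF R _ _ Si(2) a _ _ _ _ comm pb2])
      show "pk \<in> cAr T" "P!k \<in> cAr T" using i(2) Pk unfolding hom_def by auto
      show "cDom T pk = cDom T (P ! k)" using dpk .
      show "cCod T pk = cDom T (S ! i)" "cCod T (P ! k) = cDom T a" "cCod T (S ! i) = cCod T a"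
        using i(2) Pk Sicod unfolding hom_def by auto
      show "h \<in> fhom T [cDom T pk] P2" using h(1) dpk Q_def by simp
      show "feq [cDom T pk] (fcomp T p2 h) (\<lambda>i. 0, \<lambda>i. pk)" using h(2) dpk Q_def by simp
      show "feq [cDom T pk] (fcomp T q2 h) (\<lambda>i. 0, \<lambda>i. P ! k)" using h(3) dpk Q_def by simp
      show "summand_incl T [cDom T pk] P2 h" unfolding summand_incl_def
      proof (intro conjI)
        show "h \<in> fhom T [cDom T pk] P2" using h(1) dpk Q_def by simp
        show "inj_on (fst h) {..<length [cDom T pk]}" unfolding inj_on_def by simp
        show "\<forall>i<length [cDom T pk]. is_iso T (snd h i)" using eiso e_def by simp
      qed
    qed
  qed
  have "set P \<subseteq> R"
  proof
    fix x assume "x \<in> set P"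
    then obtain k where "k < length P" "P!k = x" unfolding in_set_conv_nth by blast
    then show "x \<in> R" using PkR by blast
  qed
  then show ?thesis using soP unfolding rho0_def by simp
qed

lemma fcomp_cong_left: "feq B n n' \<Longrightarrow> m \<in> fhom T A B \<Longrightarrow> feq A (fcomp T n m) (fcomp T n' m)"
  unfolding feq_def fcomp_def fhom_def by auto
lemma fcomp_cong_right: "feq A m m' \<Longrightarrow> feq A (fcomp T n m) (fcomp T n m')"
  unfolding feq_def fcomp_def by auto
lemma fhom_feq: "m \<in> fhom T A B \<Longrightarrow> feq A m m' \<Longrightarrow> m' \<in> fhom T A B"
  unfolding feq_def fhom_def by auto

lemma pb_cong:
  assumes pb: "is_fpullback T A B C f g P p q" and ff: "feq A f f'" and qq: "feq P q q'"
  shows "is_fpullback T A B C f' g P p q'"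
proof -
  have parts: "Fobj T P" "p \<in> fhom T P A" "q \<in> fhom T P B" "feq P (fcomp T f p) (fcomp T g q)"
    using pb_parts[OF pb] by auto
  show ?thesis unfolding is_fpullback_def
  proof (intro conjI allI impI)
    show "Fobj T P" "p \<in> fhom T P A" using parts by auto
    show "q' \<in> fhom T P B" using fhom_feq[OF parts(3) qq] .
    have "feq P (fcomp T f' p) (fcomp T f p)" using fcomp_cong_left[OF feq_sym[OF ff] parts(2)] .
    moreover have "feq P (fcomp T g q) (fcomp T g q')" using fcomp_cong_right[OF qq] .
    ultimately show "feq P (fcomp T f' p) (fcomp T g q')" using parts(4) feq_trans by blast
  next
    fix Q p' q''
    assume a: "Fobj T Q \<and> p' \<in> fhom T Q A \<and> q'' \<in> fhom T Q B \<and> feq Q (fcomp T f' p') (fcomp T g q'')"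
    have c: "feq Q (fcomp T f p') (fcomp T g q'')"
      using fcomp_cong_left[OF ff, of p' T Q] a feq_trans by blast
    have "\<exists>h\<in>fhom T Q P. feq Q (fcomp T p h) p' \<and> feq Q (fcomp T q h) q'' \<and>
              (\<forall>h'\<in>fhom T Q P. feq Q (fcomp T p h') p' \<and> feq Q (fcomp T q h') q'' \<longrightarrow> feq Q h h')"
      using pb a c unfolding is_fpullback_def by blast
    then obtain h where h: "h \<in> fhom T Q P" "feq Q (fcomp T p h) p'" "feq Q (fcomp T q h) q''"
       "\<forall>h'\<in>fhom T Q P. feq Q (fcomp T p h') p' \<and> feq Q (fcomp T q h') q'' \<longrightarrow> feq Q h h'" by blast
    have eq: "feq Q (fcomp T q' k) (fcomp T q k)" if "k \<in> fhom T Q P" for k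
      using fcomp_cong_left[OF feq_sym[OF qq] that] .
    show "\<exists>h\<in>fhom T Q P. feq Q (fcomp T p h) p' \<and> feq Q (fcomp T q' h) q'' \<and>
              (\<forall>h'\<in>fhom T Q P. feq Q (fcomp T p h') p' \<and> feq Q (fcomp T q' h') q'' \<longrightarrow> feq Q h h')"
    proof (rule bexI[OF _ h(1)], intro conjI ballI impI)
      show "feq Q (fcomp T p h) p'" using h(2) .
      show "feq Q (fcomp T q' h) q''" using eq[OF h(1)] h(3) feq_trans by blast
    next
      fix h' assume h': "h' \<in> fhom T Q P" "feq Q (fcomp T p h') p' \<and> feq Q (fcomp T q' h') q''"
      have "feq Q (fcomp T q h') q''" using eq[OF h'(1)] h'(2) feq_sym feq_trans by blast
      then show "feq Q h h'" using h(4) h' by blast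
    qed
  qed
qed

lemma frakR_res:
  assumes cat: "is_category T" and u: "unital T C"
   and h: "v \<in> cAr T \<and> a' \<in> cAr T \<and> a \<in> frakR T C \<and> w \<in> cAr T \<and>
        cDom T v = cDom T a' \<and> cCod T v = cDom T a \<and> cCod T a' = cDom T w \<and> cCod T a = cCod T w \<and>
        cComp T a v = cComp T w a'"
   and h2: "is_fpullback T [cDom T a] [cDom T w] [cCod T a] (\<lambda>i. 0, \<lambda>i. a) (\<lambda>i. 0, \<lambda>i. w) P p q \<and>
           m \<in> fhom T [cDom T v] P \<and>
           feq [cDom T v] (fcomp T p m) (\<lambda>i. 0, \<lambda>i. v) \<and>
           feq [cDom T v] (fcomp T q m) (\<lambda>i. 0, \<lambda>i. a') \<and>
           summand_incl T [cDom T v] P m"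
  shows "a' \<in> frakR T C"
proof -
  have pb: "is_fpullback T [cDom T a] [cDom T w] [cCod T a] (\<lambda>i. 0, \<lambda>i. a) (\<lambda>i. 0, \<lambda>i. w) P p q" using h2 by blast
  have mh: "m \<in> fhom T [cDom T v] P" "feq [cDom T v] (fcomp T q m) (\<lambda>i. 0, \<lambda>i. a')" "summand_incl T [cDom T v] P m"
    using h2 by auto
  have aC: "a \<in> cAr T" "[a] \<in> C (cCod T a)" using h unfolding frakR_def by auto
  have w: "w \<in> cAr T" "cCod T a = cCod T w" "cCod T a' = cDom T w" using h by auto
  have qf: "q \<in> fhom T P [cDom T w]" using pb_parts[OF pb] by blast
  have qi: "fst q i = 0" "snd q i \<in> hom T (P!i) (cDom T w)" if "i < length P" for i
    using qf that unfolding fhom_def by auto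
  define P' where "P' = map (\<lambda>i. snd q i) [0..<length P]"
  have P'i: "length P' = length P" "\<And>i. i < length P \<Longrightarrow> P'!i = snd q i" unfolding P'_def by auto
  have dP: "doms T P' = P"
  proof (rule nth_equalityI)
    show "length (doms T P') = length P" using P'i(1) unfolding doms_def by simp
    fix i assume "i < length (doms T P')"
    then have i: "i < length P" using P'i(1) unfolding doms_def by simp
    have "cDom T (snd q i) = P!i" using qi(2)[OF i] unfolding hom_def by simp
    then show "doms T P' ! i = P ! i" using i P'i unfolding doms_def by simp
  qed
  have soP: "sobj T (cDom T w) P'"
  proof -
    have "x \<in> cAr T \<and> cCod T x = cDom T w" if "x \<in> set P'" for x
    proof -
      from that obtain i where "i < length P'" "P'!i = x" unfolding in_set_conv_nth by blast
      then show "x \<in> cAr T \<and> cCod T x = cDom T w" using qi(2) P'i unfolding hom_def by auto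
    qed
    then show ?thesis unfolding sobj_def using ar_dom[OF cat w(1)] by blast
  qed
  have ff: "feq [cDom T a] (\<lambda>i. 0, \<lambda>i. a) (\<lambda>i. 0, \<lambda>i. [a]!i)" unfolding feq_def by simp
  have qq: "feq P q (\<lambda>i. 0, \<lambda>i. P'!i)" unfolding feq_def using qi(1) P'i(2) by simp
  have pb': "is_fpullback T [cDom T a] [cDom T w] [cCod T a] (\<lambda>i. 0, \<lambda>i. [a]!i) (\<lambda>i. 0, \<lambda>i. w) P p (\<lambda>i. 0, \<lambda>i. P'!i)"
    using pb_cong[OF pb ff qq] .
  have res: "is_res T w [a] P'" unfolding is_res_def
  proof (intro conjI)
    show "w \<in> cAr T" using w(1) .
    show "sobj T (cCod T w) [a]" unfolding sobj_def using aC(1) w(2) ar_cod[OF cat w(1)] by simp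
    show "sobj T (cDom T w) P'" using soP .
    show "\<exists>q. is_fpullback T (doms T [a]) [cDom T w] [cCod T w] (\<lambda>i. 0, \<lambda>i. [a] ! i) (\<lambda>i. 0, \<lambda>i. w) (doms T P') q (\<lambda>i. 0, \<lambda>i. P' ! i)"
    proof -
      have da: "doms T [a] = [cDom T a]" by (simp add: doms_def)
      show ?thesis unfolding da dP by (rule exI[of _ p]) (rule pb'[unfolded w(2)])
    qed
  qed
  have P'C: "P' \<in> C (cDom T w)" using wI_res[OF unital_wI[OF u] w(1) _ res] aC(2) w(2) by simp
  define j where "j = fst m 0"
  define e where "e = snd m 0"
  have j: "j < length P" "e \<in> hom T (cDom T v) (P!j)" using mh(1) unfolding fhom_def j_def e_def by auto
  have ei: "is_iso T e" using mh(3) unfolding summand_incl_def e_def by auto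
  have ae: "cComp T (snd q j) e = a'" using mh(2) unfolding feq_def fcomp_def j_def e_def by auto
  have "P'!j \<in> set P'" using j(1) P'i(1) by simp
  then have c1: "[snd q j] \<in> C (cDom T w)" using unital_single[OF u P'C] P'i(2)[OF j(1)] by simp
  have x: "snd q j \<in> cAr T" "cCod T (snd q j) = cDom T w" "cDom T (snd q j) = P!j" using qi(2)[OF j(1)] unfolding hom_def by auto
  have "cCod T e = cDom T (snd q j)" using j(2) x(3) unfolding hom_def by simp
  from s_iso_single[OF cat x(1) x(2) ei this] have "s_iso T (cDom T w) [snd q j] [a']" using ae by simp
  then have "[a'] \<in> C (cDom T w)" using wI_iso[OF unital_wI[OF u] c1] by blast
  then show ?thesis unfolding frakR_def using h w(3) by simp
qed

lemma frakR_transf: assumes cat: "is_category T" and u: "unital T C" shows "transf T (frakR T C)"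
  unfolding transf_def
proof (intro conjI allI impI)
  show "frakR T C \<subseteq> cAr T" unfolding frakR_def by blast
next
  fix f assume f: "is_iso T f"
  have fa: "f \<in> cAr T" using f unfolding is_iso_def by blast
  have V: "cCod T f \<in> cOb T" using ar_cod[OF cat fa] .
  have "s_iso T (cCod T f) [cId T (cCod T f)] [cComp T (cId T (cCod T f)) f]"
    using s_iso_single[OF cat id_ar(1)[OF cat V] id_ar(3)[OF cat V] f] id_ar(2)[OF cat V] by simp
  then have "[f] \<in> C (cCod T f)" using wI_iso[OF unital_wI[OF u] unital_idV[OF u V]] idl[OF cat fa] by simp
  then show "f \<in> frakR T C" unfolding frakR_def using fa by simp
next
  fix f g assume a: "f \<in> frakR T C \<and> g \<in> frakR T C \<and> cCod T f = cDom T g"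
  have fa: "f \<in> cAr T" "[f] \<in> C (cCod T f)" and ga: "g \<in> cAr T" "[g] \<in> C (cCod T g)" using a unfolding frakR_def by auto
  have "tcoprod T [g] [[f]] \<in> C (cCod T g)"
  proof (rule wI_tc[OF unital_wI[OF u] ga(2)])
    show "length [[f]] = length [g]" by simp
    fix i assume "i < length [g]"
    then have "i = 0" by simp
    then show "[[f]] ! i \<in> C (cDom T ([g] ! i))" using a fa(2) by simp
  qed
  then have "[cComp T g f] \<in> C (cCod T g)" unfolding tcoprod_def by simp
  then show "cComp T g f \<in> frakR T C" unfolding frakR_def using comp_ar[OF cat fa(1) ga(1)] a by simp
next
  fix v a' a u' P p q m
  assume "v \<in> cAr T \<and> a' \<in> cAr T \<and> a \<in> frakR T C \<and> u' \<in> cAr T \<and>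
        cDom T v = cDom T a' \<and> cCod T v = cDom T a \<and> cCod T a' = cDom T u' \<and> cCod T a = cCod T u' \<and>
        cComp T a v = cComp T u' a'"
    "is_fpullback T [cDom T a] [cDom T u'] [cCod T a] (\<lambda>i. 0, \<lambda>i. a) (\<lambda>i. 0, \<lambda>i. u') P p q \<and>
           m \<in> fhom T [cDom T v] P \<and>
           feq [cDom T v] (fcomp T p m) (\<lambda>i. 0, \<lambda>i. v) \<and>
           feq [cDom T v] (fcomp T q m) (\<lambda>i. 0, \<lambda>i. a') \<and>
           summand_incl T [cDom T v] P m"
  then show "a' \<in> frakR T C" by (rule frakR_res[OF cat u])
qed

lemma rho0_IndSys: assumes orb: "orbital T" and R: "transf T R" shows "IndSys T (rho0 T R)"
proof -
  have cat: "is_category T" using orbital_cat[OF orb] .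
  have w: "wIndSys T (rho0 T R)"
  proof (rule wI_intro)
    show "\<And>V S. S \<in> rho0 T R V \<Longrightarrow> sobj T V S" unfolding rho0_def by simp
    show "\<And>V S S'. S \<in> rho0 T R V \<Longrightarrow> s_iso T V S S' \<Longrightarrow> S' \<in> rho0 T R V" using rho0_iso[OF cat R] by blast
    show "\<And>a S P. a \<in> cAr T \<Longrightarrow> S \<in> rho0 T R (cCod T a) \<Longrightarrow> is_res T a S P \<Longrightarrow> P \<in> rho0 T R (cDom T a)"
      using rho0_res[OF orb R] by blast
  next
    fix V assume "rho0 T R V \<noteq> {}"
    then have V: "V \<in> cOb T" unfolding rho0_def sobj_def by auto
    have "is_iso T (cId T V)" unfolding is_iso_def using id_hom[OF cat V] id_id[OF cat V] id_ar[OF cat V] by auto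
    then have "cId T V \<in> R" using transf_iso[OF R] by blast
    then show "[cId T V] \<in> rho0 T R V" unfolding rho0_def sobj_def using V id_ar[OF cat V] by simp
  next
    fix V S Ts assume a: "S \<in> rho0 T R V" "length Ts = length S" "\<forall>i<length S. Ts ! i \<in> rho0 T R (cDom T (S ! i))"
    have so: "sobj T V (tcoprod T S Ts)" using tcoprod_sobj[OF cat] a unfolding rho0_def by auto
    have "x \<in> R" if x: "x \<in> set (tcoprod T S Ts)" for x
    proof -
      obtain i t where i: "i < length S" "t \<in> set (Ts!i)" "x = cComp T (S!i) t" using x unfolding tcoprod_set by blast
      have "S!i \<in> R" using a(1) i(1) unfolding rho0_def by auto
      moreover have "t \<in> R" "cCod T t = cDom T (S!i)" using a(3) i unfolding rho0_def sobj_def by auto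
      ultimately show ?thesis using transf_comp[OF R] i(3) by blast
    qed
    then show "tcoprod T S Ts \<in> rho0 T R V" using so unfolding rho0_def by auto
  qed
  show ?thesis unfolding IndSys_def unital_def
  proof (intro conjI w ballI allI impI)
    fix V assume "V \<in> cOb T"
    then have "[] \<in> rho0 T R V" unfolding rho0_def sobj_def by simp
    then show "rho0 T R V \<noteq> {}" "[] \<in> rho0 T R V" by auto
  next
    fix V S S' assume "S @ S' \<in> rho0 T R V"
    then show "S \<in> rho0 T R V" "S' \<in> rho0 T R V" unfolding rho0_def sobj_def by auto
  next
    fix V S S' assume "S \<in> rho0 T R V \<and> S' \<in> rho0 T R V"
    then show "S @ S' \<in> rho0 T R V" unfolding rho0_def sobj_def by auto
  qed
qed

lemma rho0_adj: assumes cat: "is_category T" and u: "unital T C" and R: "transf T R"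
  shows "frakR T C \<subseteq> R \<longleftrightarrow> C \<le> rho0 T R"
proof
  assume sub: "frakR T C \<subseteq> R"
  show "C \<le> rho0 T R"
  proof (rule le_funI, rule subsetI)
    fix V S assume S: "S \<in> C V"
    have so: "sobj T V S" using wI_sobj[OF unital_wI[OF u] S] .
    have "x \<in> R" if "x \<in> set S" for x
    proof -
      have "[x] \<in> C V" using unital_single[OF u S that] .
      moreover have "x \<in> cAr T" "cCod T x = V" using so that unfolding sobj_def by auto
      ultimately show ?thesis using sub unfolding frakR_def by auto
    qed
    then show "S \<in> rho0 T R V" using so unfolding rho0_def by auto
  qed
next
  assume le: "C \<le> rho0 T R"
  show "frakR T C \<subseteq> R"
  proof
    fix f assume "f \<in> frakR T C"
    then have "[f] \<in> C (cCod T f)" unfolding frakR_def by simp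
    then have "[f] \<in> rho0 T R (cCod T f)" using le by (auto simp: le_fun_def)
    then show "f \<in> R" unfolding rho0_def by simp
  qed
qed

definition Dgen :: "('o,'m) cat \<Rightarrow> 'm set \<Rightarrow> ('o,'m) tsub" where
  "Dgen T R = (\<lambda>V. {P. \<exists>f g. f \<in> R \<and> g \<in> cAr T \<and> cCod T g = cCod T f \<and> cDom T g = V \<and> is_res T g [f] P})"

lemma Fbar_eq: "Fbar T R = Cl T (sup (F0 T) (Cl T (Dgen T R)))" unfolding Fbar_def wjoin_def Dgen_def by simp

lemma Dgen_sobj: "S \<in> Dgen T R V \<Longrightarrow> sobj T V S" unfolding Dgen_def by (auto dest: is_res_sobj)
lemma F0_sobj: "S \<in> F0 T V \<Longrightarrow> sobj T V S" unfolding F0_def by (auto dest: s_iso_sobj)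

lemma Fbar_props:
  assumes cat: "is_category T"
  shows "wIndSys T (Fbar T R)" "F0 T \<le> Fbar T R" "Dgen T R \<le> Fbar T R"
    "\<And>C. wIndSys T C \<Longrightarrow> F0 T \<le> C \<Longrightarrow> Dgen T R \<le> C \<Longrightarrow> Fbar T R \<le> C"
proof -
  have D: "\<forall>V S. S \<in> Dgen T R V \<longrightarrow> sobj T V S" by (intro allI impI, erule Dgen_sobj)
  note ClD = Cl_props[OF cat D]
  have U: "\<forall>V S. S \<in> sup (F0 T) (Cl T (Dgen T R)) V \<longrightarrow> sobj T V S"
    using F0_sobj wI_sobj[OF ClD(1)] by auto
  note ClU = Cl_props[OF cat U]
  show "wIndSys T (Fbar T R)" unfolding Fbar_eq by (rule ClU(1))
  show "F0 T \<le> Fbar T R" unfolding Fbar_eq by (rule order_trans[OF sup_ge1 ClU(2)])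
  show "Dgen T R \<le> Fbar T R" unfolding Fbar_eq by (rule order_trans[OF ClD(2) order_trans[OF sup_ge2 ClU(2)]])
  fix C assume C: "wIndSys T C" "F0 T \<le> C" "Dgen T R \<le> C"
  have "Cl T (Dgen T R) \<le> C" using ClD(3)[OF C(1) C(3)] .
  then have "sup (F0 T) (Cl T (Dgen T R)) \<le> C" using C(2) by simp
  then show "Fbar T R \<le> C" unfolding Fbar_eq by (rule ClU(3)[OF C(1)])
qed

lemma F0_mem: assumes cat: "is_category T" and U: "U \<in> cOb T" shows "[] \<in> F0 T U" "[cId T U] \<in> F0 T U"
proof -
  have "sobj T U []" "sobj T U [cId T U]" unfolding sobj_def using U id_ar[OF cat U] by auto
  then show "[] \<in> F0 T U" "[cId T U] \<in> F0 T U" unfolding F0_def using s_iso_refl[OF cat] by auto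
qed

lemma Fbar_unital: assumes cat: "is_category T" shows "unital T (Fbar T R)"
proof -
  note FP = Fbar_props[OF cat, where R=R]
  have F: "[] \<in> Fbar T R U \<and> [cId T U] \<in> Fbar T R U" if "U \<in> cOb T" for U
    using F0_mem[OF cat that] FP(2) by (auto simp: le_fun_def)
  show ?thesis unfolding unital_def
  proof (intro conjI FP(1) ballI allI impI)
    fix V assume "V \<in> cOb T" then show "Fbar T R V \<noteq> {}" using F by blast
  next
    fix V S S' assume "S @ S' \<in> Fbar T R V"
    then show "S \<in> Fbar T R V" "S' \<in> Fbar T R V" using wI_split[OF cat FP(1) F] by blast+
  qed
qed

lemma R_le_frakR_Fbar: assumes cat: "is_category T" and R: "transf T R" shows "R \<subseteq> frakR T (Fbar T R)"
proof
  fix f assume f: "f \<in> R"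
  have fa: "f \<in> cAr T" using transf_sub[OF R] f by blast
  have "[f] \<in> Dgen T R (cCod T f)" unfolding Dgen_def
    using f is_res_id[OF cat fa] id_ar[OF cat ar_cod[OF cat fa]] by blast
  then have "[f] \<in> Fbar T R (cCod T f)" using Fbar_props(3)[OF cat, where R=R] by (auto simp: le_fun_def)
  then show "f \<in> frakR T (Fbar T R)" unfolding frakR_def using fa by simp
qed

lemma Fbar_adj: assumes cat: "is_category T" and u: "unital T C" and R: "transf T R"
  shows "Fbar T R \<le> C \<longleftrightarrow> R \<subseteq> frakR T C"
proof
  assume "Fbar T R \<le> C"
  then have "frakR T (Fbar T R) \<subseteq> frakR T C" unfolding frakR_def by (auto simp: le_fun_def)
  then show "R \<subseteq> frakR T C" using R_le_frakR_Fbar[OF cat R] by blast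
next
  assume sub: "R \<subseteq> frakR T C"
  have w: "wIndSys T C" using unital_wI[OF u] .
  show "Fbar T R \<le> C"
  proof (rule Fbar_props(4)[OF cat w])
    show "F0 T \<le> C"
    proof (rule le_funI, rule subsetI)
      fix V S assume "S \<in> F0 T V"
      then have S: "s_iso T V [] S \<or> s_iso T V [cId T V] S" unfolding F0_def by simp
      then have "V \<in> cOb T" by (auto dest: s_iso_sobj simp: sobj_def)
      then have "[] \<in> C V" "[cId T V] \<in> C V" using unital_nil[OF u] unital_idV[OF u] by auto
      then show "S \<in> C V" using S wI_iso[OF w] by blast
    qed
    show "Dgen T R \<le> C"
    proof (rule le_funI, rule subsetI)
      fix V P assume "P \<in> Dgen T R V"
      then obtain f g where fg: "f \<in> R" "g \<in> cAr T" "cCod T g = cCod T f" "cDom T g = V" "is_res T g [f] P"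
        unfolding Dgen_def by blast
      have "[f] \<in> C (cCod T g)" using sub fg unfolding frakR_def by auto
      then show "P \<in> C V" using wI_res[OF w fg(2) _ fg(5)] fg(4) by blast
    qed
  qed
qed

theorem mainTheorem15:
  fixes T :: "('o, 'm) cat"
  assumes "orbital T"
  shows "(\<forall>C. unital T C \<longrightarrow> transf T (frakR T C)) \<and>
    (\<forall>R. transf T R \<longrightarrow> (\<exists>!C. IndSys T C \<and> frakR T C = R)) \<and>
    (let \<rho> = (\<lambda>R. THE C. IndSys T C \<and> frakR T C = R) in
       (\<forall>R. transf T R \<longrightarrow> unital T (\<rho> R)) \<and>
       (\<forall>C R. unital T C \<and> transf T R \<longrightarrow> (frakR T C \<subseteq> R \<longleftrightarrow> C \<le> \<rho> R)) \<and>
       (\<forall>R R'. transf T R \<and> transf T R' \<and> \<rho> R \<le> \<rho> R' \<longrightarrow> R \<subseteq> R')) \<and>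
    (\<forall>R. transf T R \<longrightarrow> unital T (Fbar T R)) \<and>
    (\<forall>C R. unital T C \<and> transf T R \<longrightarrow> (Fbar T R \<le> C \<longleftrightarrow> R \<subseteq> frakR T C)) \<and>
    (\<forall>R R'. transf T R \<and> transf T R' \<and> Fbar T R \<le> Fbar T R' \<longrightarrow> R \<subseteq> R')"
proof -
  have cat: "is_category T" using orbital_cat[OF assms] .
  have uniq: "IndSys T C \<and> frakR T C = R \<longleftrightarrow> C = rho0 T R" if R: "transf T R" for R C
    using IndSys_eq_rho0[OF cat] rho0_IndSys[OF assms R] frakR_rho0[OF cat R] by metis
  have the: "(THE C. IndSys T C \<and> frakR T C = R) = rho0 T R" if R: "transf T R" for R
    using uniq[OF R] by simp
  have p1: "\<forall>C. unital T C \<longrightarrow> transf T (frakR T C)" using frakR_transf[OF cat] by blast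
  have p2: "\<forall>R. transf T R \<longrightarrow> (\<exists>!C. IndSys T C \<and> frakR T C = R)" using uniq by auto
  have p3a: "\<forall>R. transf T R \<longrightarrow> unital T (rho0 T R)" using rho0_IndSys[OF assms] IndSys_unital by blast
  have p3b: "\<forall>C R. unital T C \<and> transf T R \<longrightarrow> (frakR T C \<subseteq> R \<longleftrightarrow> C \<le> rho0 T R)" using rho0_adj[OF cat] by blast
  have p3c: "\<forall>R R'. transf T R \<and> transf T R' \<and> rho0 T R \<le> rho0 T R' \<longrightarrow> R \<subseteq> R'"
  proof (intro allI impI)
    fix R R' assume a: "transf T R \<and> transf T R' \<and> rho0 T R \<le> rho0 T R'"
    then have "frakR T (rho0 T R) \<subseteq> frakR T (rho0 T R')" unfolding frakR_def by (auto simp: le_fun_def)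
    then show "R \<subseteq> R'" using frakR_rho0[OF cat] a by simp
  qed
  have p3: "let \<rho> = (\<lambda>R. THE C. IndSys T C \<and> frakR T C = R) in
       (\<forall>R. transf T R \<longrightarrow> unital T (\<rho> R)) \<and>
       (\<forall>C R. unital T C \<and> transf T R \<longrightarrow> (frakR T C \<subseteq> R \<longleftrightarrow> C \<le> \<rho> R)) \<and>
       (\<forall>R R'. transf T R \<and> transf T R' \<and> \<rho> R \<le> \<rho> R' \<longrightarrow> R \<subseteq> R')"
    unfolding Let_def
  proof (intro conjI allI impI)
    fix R assume "transf T R" then show "unital T (THE C. IndSys T C \<and> frakR T C = R)" using p3a the by simp
  next
    fix C R assume "unital T C \<and> transf T R"
    then show "(frakR T C \<subseteq> R) = (C \<le> (THE C. IndSys T C \<and> frakR T C = R))" using p3b the by simp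
  next
    fix R R' assume a: "transf T R \<and> transf T R' \<and> (THE C. IndSys T C \<and> frakR T C = R) \<le> (THE C. IndSys T C \<and> frakR T C = R')"
    then have "rho0 T R \<le> rho0 T R'" using the[of R] the[of R'] by simp
    then show "R \<subseteq> R'" using p3c a by blast
  qed
  have p4: "\<forall>R. transf T R \<longrightarrow> unital T (Fbar T R)" using Fbar_unital[OF cat] by blast
  have p5: "\<forall>C R. unital T C \<and> transf T R \<longrightarrow> (Fbar T R \<le> C \<longleftrightarrow> R \<subseteq> frakR T C)" using Fbar_adj[OF cat] by blast
  have p6: "\<forall>R R'. transf T R \<and> transf T R' \<and> Fbar T R \<le> Fbar T R' \<longrightarrow> R \<subseteq> R'"
  proof (intro allI impI)
    fix R R' assume a: "transf T R \<and> transf T R' \<and> Fbar T R \<le> Fbar T R'"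
    then have R': "transf T R'" by blast
    have "unital T (rho0 T R')" using p3a R' by blast
    moreover have "R' \<subseteq> frakR T (rho0 T R')" using frakR_rho0[OF cat R'] by simp
    ultimately have "Fbar T R' \<le> rho0 T R'" using Fbar_adj[OF cat _ R'] by blast
    then have "Fbar T R \<le> rho0 T R'" using a order_trans by blast
    then have "R \<subseteq> frakR T (rho0 T R')" using Fbar_adj[OF cat \<open>unital T (rho0 T R')\<close>] a by blast
    then show "R \<subseteq> R'" using frakR_rho0[OF cat R'] by simp
  qed
  show ?thesis using p1 p2 p3 p4 p5 p6 by blast
qed

end
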